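(* Let $\Omega\subset\mathbb{R}^N$ be a bounded domain with Lipschitz boundary, $s\in(0,1)$, $p\in(1,+\infty)$. For $\delta>0$ define $\mathcal{J}_{\delta,s,p}:L^p(\Omega)\to[0,+\infty]$ by $\mathcal{J}_{\delta,s,p}(u)=[u]_{W^{\delta,s,p}(\Omega_{\delta})}^p$ (with $u$ extended by zero outside $\Omega$). Then, with respect to the strong topology of $L^p(\Omega)$, $\mathcal{J}_{\delta,s,p}$ $\Gamma$-converges as $\delta\to+\infty$ to $\mathcal{J}_{\infty,s,p}(u)=[u]_{W^{s,p}(\mathbb{R}^N)}^p$ (with $u$ extended by zero outside $\Omega$), for all $u\in L^p(\Omega)$.
   Context: Here $\partial_\delta\Omega=\{y\in\mathbb{R}^N\setminus\Omega: |x-y|<\delta \text{ for some } x\in\Omega\}$, $\Omega_\delta=\Omega\cup\partial_\delta\Omega$, $[u]_{W^{\delta,s,p}(\Omega_{\delta})}^p=\int_{\Omega_{\delta}}\int_{\Omega_{\delta}\cap B(x,\delta)}\frac{|u(x)-u(y)|^p}{|x-y|^{N+sp}}dydx$ and $[u]_{W^{s,p}(\mathbb{R}^N)}^p=\int_{\mathbb{R}^N}\int_{\mathbb{R}^N}\frac{|u(x)-u(y)|^p}{|x-y|^{N+sp}}dydx$, both possibly $+\infty$. *)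

theory Defs
  imports "HOL-Analysis.Analysis"
begin

text \<open>Bounded Lipschitz domain: open, connected, bounded, and near every boundary
point the set lies (after choosing a unit direction e, i.e. a rotation of
coordinates) strictly below the graph of a Lipschitz function of the
coordinates orthogonal to e.\<close>
definition lipschitz_boundary :: "'a::euclidean_space set \<Rightarrow> bool" where
  "lipschitz_boundary \<Omega> \<longleftrightarrow>
     (\<forall>x\<in>frontier \<Omega>. \<exists>r>0. \<exists>e::'a. \<exists>L. \<exists>g::'a \<Rightarrow> real.
        norm e = 1 \<and> L \<ge> 0 \<and>
        (\<forall>y z. \<bar>g y - g z\<bar> \<le> L * norm (y - z)) \<and>
        (\<forall>y. g y = g (y - (y \<bullet> e) *\<^sub>R e)) \<and>
        \<Omega> \<inter> ball x r = {y \<in> ball x r. y \<bullet> e < g y})"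

definition bounded_lipschitz_domain :: "'a::euclidean_space set \<Rightarrow> bool" where
  "bounded_lipschitz_domain \<Omega> \<longleftrightarrow>
     open \<Omega> \<and> connected \<Omega> \<and> \<Omega> \<noteq> {} \<and> bounded \<Omega> \<and> lipschitz_boundary \<Omega>"

definition zext :: "'a set \<Rightarrow> ('a \<Rightarrow> real) \<Rightarrow> 'a \<Rightarrow> real" where
  "zext \<Omega> u = (\<lambda>x. if x \<in> \<Omega> then u x else 0)"

text \<open>L^p(\<Omega>) membership (functions represented by arbitrary representatives on \<Omega>).\<close>
definition in_Lp :: "real \<Rightarrow> 'a::euclidean_space set \<Rightarrow> ('a \<Rightarrow> real) \<Rightarrow> bool" where
  "in_Lp p \<Omega> u \<longleftrightarrow> zext \<Omega> u \<in> borel_measurable lebesgue \<and>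
     (\<integral>\<^sup>+ x\<in>\<Omega>. ennreal (\<bar>u x\<bar> powr p) \<partial>lebesgue) < \<infinity>"

definition Lp_conv :: "real \<Rightarrow> 'a::euclidean_space set \<Rightarrow> (nat \<Rightarrow> 'a \<Rightarrow> real) \<Rightarrow> ('a \<Rightarrow> real) \<Rightarrow> bool" where
  "Lp_conv p \<Omega> uk u \<longleftrightarrow>
     ((\<lambda>k. \<integral>\<^sup>+ x\<in>\<Omega>. ennreal (\<bar>uk k x - u x\<bar> powr p) \<partial>lebesgue) \<longlongrightarrow> 0) sequentially"

text \<open>\<Omega>_\<delta> = \<Omega> \<union> \<partial>_\<delta>\<Omega> (for \<delta> > 0 this is the open \<delta>-neighbourhood of \<Omega>).\<close>
definition Omega_delta :: "'a::metric_space set \<Rightarrow> real \<Rightarrow> 'a set" where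
  "Omega_delta \<Omega> \<delta> = \<Omega> \<union> {y. y \<notin> \<Omega> \<and> (\<exists>x\<in>\<Omega>. dist x y < \<delta>)}"

definition J_delta :: "real \<Rightarrow> real \<Rightarrow> 'a::euclidean_space set \<Rightarrow> real \<Rightarrow> ('a \<Rightarrow> real) \<Rightarrow> ennreal" where
  "J_delta s p \<Omega> \<delta> u =
     (let v = zext \<Omega> u; D = Omega_delta \<Omega> \<delta> in
      \<integral>\<^sup>+ x\<in>D. (\<integral>\<^sup>+ y\<in>D \<inter> ball x \<delta>.
          ennreal (\<bar>v x - v y\<bar> powr p / norm (x - y) powr (real DIM('a) + s * p)) \<partial>lebesgue) \<partial>lebesgue)"

definition J_inf :: "real \<Rightarrow> real \<Rightarrow> 'a::euclidean_space set \<Rightarrow> ('a \<Rightarrow> real) \<Rightarrow> ennreal" where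
  "J_inf s p \<Omega> u =
     (let v = zext \<Omega> u in
      \<integral>\<^sup>+ x. (\<integral>\<^sup>+ y.
          ennreal (\<bar>v x - v y\<bar> powr p / norm (x - y) powr (real DIM('a) + s * p)) \<partial>lebesgue) \<partial>lebesgue)"

definition gamma_converges_at_top ::
  "(real \<Rightarrow> 'u \<Rightarrow> ennreal) \<Rightarrow> ('u \<Rightarrow> ennreal) \<Rightarrow> ('u \<Rightarrow> bool)
     \<Rightarrow> ((nat \<Rightarrow> 'u) \<Rightarrow> 'u \<Rightarrow> bool) \<Rightarrow> bool" where
  "gamma_converges_at_top J Jlim X conv \<longleftrightarrow>
     (\<forall>\<delta>::nat \<Rightarrow> real. filterlim \<delta> at_top sequentially \<longrightarrow>
        (\<forall>u. X u \<longrightarrow>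
           (\<forall>uk. (\<forall>k. X (uk k)) \<longrightarrow> conv uk u \<longrightarrow>
                 Jlim u \<le> liminf (\<lambda>k. J (\<delta> k) (uk k))) \<and>
           (\<exists>uk. (\<forall>k. X (uk k)) \<and> conv uk u \<and>
                 limsup (\<lambda>k. J (\<delta> k) (uk k)) \<le> Jlim u)))"

end

theory Submission
  imports Defs
begin

lemma sigma_finite_lebesgue: "sigma_finite_measure (lebesgue :: 'a::euclidean_space measure)"
proof
  show "\<exists>A::'a set set. countable A \<and> A \<subseteq> sets lebesgue \<and> \<Union>A = space lebesgue \<and> (\<forall>a\<in>A. emeasure lebesgue a \<noteq> \<infinity>)"
    by (intro exI[of _ "range (\<lambda>n::nat. box (- real n *\<^sub>R One) (real n *\<^sub>R One))"])
       (auto simp: emeasure_lborel_cbox_eq UN_box_eq_UNIV)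
qed

lemma meas_prod:
  fixes v :: "'a::euclidean_space \<Rightarrow> real"
  assumes [measurable]: "v \<in> borel_measurable lebesgue" and D[measurable]: "D \<in> sets lebesgue"
  shows "(\<lambda>(x,y). ennreal (\<bar>v x - v y\<bar> powr p / norm (x - y) powr c) * indicator (D \<inter> ball x d) y) \<in> borel_measurable (lebesgue \<Otimes>\<^sub>M lebesgue)"
proof -
  let ?M = "(lebesgue::'a measure) \<Otimes>\<^sub>M (lebesgue::'a measure)"
  have i: "(\<lambda>x::'a. x) \<in> borel_measurable lebesgue"
    using id_borel_measurable_lebesgue by (simp add: id_def)
  have f0: "fst \<in> ?M \<rightarrow>\<^sub>M lebesgue" by (rule measurable_fst)
  have f[measurable]: "fst \<in> borel_measurable ?M"
    using measurable_compose[OF f0 i] by simp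
  have s0: "snd \<in> ?M \<rightarrow>\<^sub>M lebesgue" by (rule measurable_snd)
  have s[measurable]: "snd \<in> borel_measurable ?M"
    using measurable_compose[OF s0 i] by simp
  have vf[measurable]: "(\<lambda>z. v (fst z)) \<in> borel_measurable ?M"
    by (rule measurable_compose[OF f0 assms(1)])
  have vs[measurable]: "(\<lambda>z. v (snd z)) \<in> borel_measurable ?M"
    by (rule measurable_compose[OF s0 assms(1)])
  have ds[measurable]: "(\<lambda>z. fst z - snd z) \<in> borel_measurable ?M"
    by (intro borel_measurable_diff f s)
  have Ds[measurable]: "(\<lambda>z. indicator D (snd z) :: ennreal) \<in> borel_measurable ?M"
    by (rule measurable_compose[OF s0 borel_measurable_indicator[OF D]])
  have bs: "{z \<in> space ?M. norm (fst z - snd z) < d} \<in> sets ?M"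
    by measurable
  have Bs[measurable]: "(\<lambda>z. indicator {z \<in> space ?M. norm (fst z - snd z) < d} z :: ennreal) \<in> borel_measurable ?M"
    by (rule borel_measurable_indicator[OF bs])
  have "(\<lambda>z. ennreal (\<bar>v (fst z) - v (snd z)\<bar> powr p / norm (fst z - snd z) powr c) * (indicator D (snd z) * indicator {z \<in> space ?M. norm (fst z - snd z) < d} z)) \<in> borel_measurable ?M"
    by measurable
  moreover have "(\<lambda>(x,y). ennreal (\<bar>v x - v y\<bar> powr p / norm (x - y) powr c) * indicator (D \<inter> ball x d) y) = (\<lambda>z. ennreal (\<bar>v (fst z) - v (snd z)\<bar> powr p / norm (fst z - snd z) powr c) * (indicator D (snd z) * indicator {z \<in> space ?M. norm (fst z - snd z) < d} z))"
    by (auto simp: fun_eq_iff indicator_def space_pair_measure dist_norm)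
  ultimately show ?thesis by simp
qed

lemma ae_subseq:
  fixes uk :: "nat \<Rightarrow> 'a::euclidean_space \<Rightarrow> real"
  assumes p: "0 < p"
    and mk: "\<And>k. zext \<Omega> (uk k) \<in> borel_measurable lebesgue"
    and mu: "zext \<Omega> u \<in> borel_measurable lebesgue"
    and conv: "Lp_conv p \<Omega> uk u"
  shows "\<exists>r. strict_mono r \<and> (AE x in lebesgue. (\<lambda>n. zext \<Omega> (uk (r n)) x) \<longlonglongrightarrow> zext \<Omega> u x)"
proof -
  define w where "w k x = ennreal (\<bar>zext \<Omega> (uk k) x - zext \<Omega> u x\<bar> powr p)" for k x
  have wm[measurable]: "w k \<in> borel_measurable lebesgue" for k
    unfolding w_def using mk[of k] mu by measurable
  have eq: "(\<integral>\<^sup>+ x\<in>\<Omega>. ennreal (\<bar>uk k x - u x\<bar> powr p) \<partial>lebesgue) = (\<integral>\<^sup>+ x. w k x \<partial>lebesgue)" for k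
    by (intro nn_integral_cong) (auto simp: w_def zext_def indicator_def)
  have I: "(\<lambda>k. \<integral>\<^sup>+ x. w k x \<partial>lebesgue) \<longlonglongrightarrow> 0"
    using conv unfolding Lp_conv_def eq .
  have "\<forall>n. \<exists>N. \<forall>k\<ge>N. (\<integral>\<^sup>+ x. w k x \<partial>lebesgue) < ennreal ((1/2)^n)"
  proof
    fix n :: nat
    have "eventually (\<lambda>k. (\<integral>\<^sup>+ x. w k x \<partial>lebesgue) < ennreal ((1/2)^n)) sequentially"
      by (rule order_tendstoD(2)[OF I]) simp
    then show "\<exists>N. \<forall>k\<ge>N. (\<integral>\<^sup>+ x. w k x \<partial>lebesgue) < ennreal ((1/2)^n)"
      by (simp add: eventually_sequentially)
  qed
  then obtain N where N: "\<And>n k. k \<ge> N n \<Longrightarrow> (\<integral>\<^sup>+ x. w k x \<partial>lebesgue) < ennreal ((1/2)^n)"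
    by metis
  define r where "r = rec_nat (N 0) (\<lambda>n rn. max (N (Suc n)) (Suc rn))"
  have r0: "r 0 = N 0" and rS: "r (Suc n) = max (N (Suc n)) (Suc (r n))" for n
    by (simp_all add: r_def)
  have rN: "r n \<ge> N n" for n
    by (cases n) (simp_all add: r0 rS)
  have sm: "strict_mono r"
    unfolding strict_mono_Suc_iff rS by (metis lessI max.cobounded2 less_le_trans)
  have "(\<integral>\<^sup>+ x. (\<Sum>n. w (r n) x) \<partial>lebesgue) = (\<Sum>n. \<integral>\<^sup>+ x. w (r n) x \<partial>lebesgue)"
    by (rule nn_integral_suminf) simp
  also have "\<dots> \<le> (\<Sum>n. ennreal ((1/2)^n))"
    by (rule suminf_le) (simp_all add: less_imp_le[OF N[OF rN]])
  also have "\<dots> = ennreal (\<Sum>n. (1/2::real)^n)"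
    by (intro suminf_ennreal2 summable_geometric) simp_all
  also have "\<dots> < \<infinity>" by simp
  finally have fin: "(\<integral>\<^sup>+ x. (\<Sum>n. w (r n) x) \<partial>lebesgue) \<noteq> \<infinity>" by simp
  have "AE x in lebesgue. (\<Sum>n. w (r n) x) \<noteq> \<infinity>"
    by (rule nn_integral_PInf_AE[OF _ fin]) simp
  then have "AE x in lebesgue. (\<lambda>n. zext \<Omega> (uk (r n)) x) \<longlonglongrightarrow> zext \<Omega> u x"
  proof (rule AE_mp, intro AE_I2 impI)
    fix x assume "(\<Sum>n. w (r n) x) \<noteq> \<infinity>"
    then have "summable (\<lambda>n. \<bar>zext \<Omega> (uk (r n)) x - zext \<Omega> u x\<bar> powr p)"
      by (intro summable_suminf_not_top) (auto simp: w_def)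
    then have a: "(\<lambda>n. \<bar>zext \<Omega> (uk (r n)) x - zext \<Omega> u x\<bar> powr p) \<longlonglongrightarrow> 0"
      by (rule summable_LIMSEQ_zero)
    have "(\<lambda>n. (\<bar>zext \<Omega> (uk (r n)) x - zext \<Omega> u x\<bar> powr p) powr (1/p)) \<longlonglongrightarrow> 0"
      by (rule tendsto_zero_powrI[OF a tendsto_const]) (use p in auto)
    moreover have "(\<bar>zext \<Omega> (uk (r n)) x - zext \<Omega> u x\<bar> powr p) powr (1/p) = \<bar>zext \<Omega> (uk (r n)) x - zext \<Omega> u x\<bar>" for n
      using p by (simp add: powr_powr)
    ultimately have "(\<lambda>n. \<bar>zext \<Omega> (uk (r n)) x - zext \<Omega> u x\<bar>) \<longlonglongrightarrow> 0" by simp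
    then show "(\<lambda>n. zext \<Omega> (uk (r n)) x) \<longlonglongrightarrow> zext \<Omega> u x"
      by (simp only: tendsto_rabs_zero_iff LIM_zero_iff)
  qed
  with sm show ?thesis by blast
qed


lemma Omega_delta_eq: "Omega_delta \<Omega> d = \<Omega> \<union> (\<Union>x\<in>\<Omega>. ball x d)"
  by (auto simp: Omega_delta_def)

lemma Omega_delta_sets: "open \<Omega> \<Longrightarrow> Omega_delta \<Omega> d \<in> sets lebesgue"
  unfolding Omega_delta_eq
  by (intro sets_completionI_sets) (auto simp: sets_lborel intro!: borel_open open_Un open_UN)

lemma ev_gt: "filterlim (\<delta>::nat \<Rightarrow> real) at_top sequentially \<Longrightarrow> eventually (\<lambda>k. z < \<delta> k) sequentially"
  using filterlim_at_top_dense by blast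

lemma ev_in_Omega_delta:
  assumes "a \<in> \<Omega>" "filterlim (\<delta>::nat \<Rightarrow> real) at_top sequentially"
  shows "eventually (\<lambda>k. x \<in> Omega_delta \<Omega> (\<delta> k)) sequentially"
proof -
  have "eventually (\<lambda>k. dist a x < \<delta> k) sequentially" by (rule ev_gt[OF assms(2)])
  then show ?thesis by (rule eventually_mono) (use assms(1) in \<open>auto simp: Omega_delta_def\<close>)
qed

lemma fatou_core:
  fixes uk :: "nat \<Rightarrow> 'a::euclidean_space \<Rightarrow> real" and \<delta> :: "nat \<Rightarrow> real"
  assumes \<Omega>: "open \<Omega>" "\<Omega> \<noteq> {}" and p: "0 < p"
    and \<delta>: "filterlim \<delta> at_top sequentially"
    and mk: "\<And>k. zext \<Omega> (uk k) \<in> borel_measurable lebesgue"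
    and ae: "AE x in lebesgue. (\<lambda>k. zext \<Omega> (uk k) x) \<longlonglongrightarrow> zext \<Omega> u x"
  shows "J_inf s p \<Omega> u \<le> liminf (\<lambda>k. J_delta s p \<Omega> (\<delta> k) (uk k))"
proof -
  define c where "c = real DIM('a) + s*p"
  define v where "v = zext \<Omega> u"
  define vk where "vk k = zext \<Omega> (uk k)" for k
  define D where "D k = Omega_delta \<Omega> (\<delta> k)" for k
  define G where "G w x y = ennreal (\<bar>w x - w y\<bar> powr p / norm (x - y) powr c)" for w :: "'a \<Rightarrow> real" and x y
  define h where "h k x y = G (vk k) x y * indicator (D k \<inter> ball x (\<delta> k)) y" for k x y
  define g where "g k x = (\<integral>\<^sup>+y. h k x y \<partial>lebesgue) * indicator (D k) x" for k x
  have Jk: "J_delta s p \<Omega> (\<delta> k) (uk k) = (\<integral>\<^sup>+x. g k x \<partial>lebesgue)" for k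
    by (simp add: J_delta_def Let_def g_def h_def G_def D_def vk_def c_def)
  have Ji: "J_inf s p \<Omega> u = (\<integral>\<^sup>+x. (\<integral>\<^sup>+y. G v x y \<partial>lebesgue) \<partial>lebesgue)"
    by (simp add: J_inf_def Let_def G_def v_def c_def)
  obtain a where a: "a \<in> \<Omega>" using \<Omega> by auto
  have Ds: "D k \<in> sets lebesgue" for k
    unfolding D_def by (rule Omega_delta_sets[OF \<Omega>(1)])
  have hm: "case_prod (h k) \<in> borel_measurable (lebesgue \<Otimes>\<^sub>M lebesgue)" for k
    using meas_prod[OF mk[of k] Ds[of k], of p c "\<delta> k"] unfolding h_def G_def vk_def by simp
  have hmy: "h k x \<in> borel_measurable lebesgue" for k x
    using measurable_Pair2[OF hm, of x] by simp
  have gm: "g k \<in> borel_measurable lebesgue" for k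
  proof -
    have "(\<lambda>x. \<integral>\<^sup>+y. h k x y \<partial>lebesgue) \<in> borel_measurable lebesgue"
      by (rule sigma_finite_measure.borel_measurable_nn_integral[OF sigma_finite_lebesgue hm])
    then show ?thesis unfolding g_def using Ds[of k] by measurable
  qed
  have A: "AE x in lebesgue. (\<integral>\<^sup>+y. G v x y \<partial>lebesgue) \<le> liminf (\<lambda>k. g k x)"
    using ae
  proof (rule AE_mp, intro AE_I2 impI)
    fix x assume Px: "(\<lambda>k. zext \<Omega> (uk k) x) \<longlonglongrightarrow> zext \<Omega> u x"
    have "eventually (\<lambda>k. g k x = (\<integral>\<^sup>+y. h k x y \<partial>lebesgue)) sequentially"
      using ev_in_Omega_delta[OF a \<delta>, of x] by eventually_elim (simp add: g_def D_def)
    then have L: "liminf (\<lambda>k. g k x) = liminf (\<lambda>k. \<integral>\<^sup>+y. h k x y \<partial>lebesgue)"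
      by (rule Liminf_eq)
    have "AE y in lebesgue. G v x y \<le> liminf (\<lambda>k. h k x y)"
      using ae
    proof (rule AE_mp, intro AE_I2 impI)
      fix y assume Py: "(\<lambda>k. zext \<Omega> (uk k) y) \<longlonglongrightarrow> zext \<Omega> u y"
      have "eventually (\<lambda>k. h k x y = G (vk k) x y) sequentially"
        using ev_in_Omega_delta[OF a \<delta>, of y] ev_gt[OF \<delta>, of "dist x y"]
        by eventually_elim (simp add: h_def D_def)
      then have "liminf (\<lambda>k. h k x y) = liminf (\<lambda>k. G (vk k) x y)"
        by (rule Liminf_eq)
      also have "\<dots> = G v x y"
      proof (rule lim_imp_Liminf, simp)
        have t: "(\<lambda>k. \<bar>vk k x - vk k y\<bar> powr p) \<longlonglongrightarrow> \<bar>v x - v y\<bar> powr p"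
          using Px Py p unfolding vk_def v_def
          by (intro tendsto_powr' tendsto_rabs tendsto_diff tendsto_const) auto
        have "(\<lambda>k. \<bar>vk k x - vk k y\<bar> powr p / norm (x - y) powr c) \<longlonglongrightarrow> \<bar>v x - v y\<bar> powr p / norm (x - y) powr c"
        proof (cases "norm (x - y) powr c = 0")
          case True then show ?thesis by simp
        next
          case False then show ?thesis by (intro tendsto_divide t tendsto_const)
        qed
        then show "(\<lambda>k. G (vk k) x y) \<longlonglongrightarrow> G v x y"
          unfolding G_def by (rule tendsto_ennrealI)
      qed
      finally show "G v x y \<le> liminf (\<lambda>k. h k x y)" by simp
    qed
    then have "(\<integral>\<^sup>+y. G v x y \<partial>lebesgue) \<le> (\<integral>\<^sup>+y. liminf (\<lambda>k. h k x y) \<partial>lebesgue)"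
      by (rule nn_integral_mono_AE)
    also have "\<dots> \<le> liminf (\<lambda>k. \<integral>\<^sup>+y. h k x y \<partial>lebesgue)"
      by (rule nn_integral_liminf[OF hmy])
    finally show "(\<integral>\<^sup>+y. G v x y \<partial>lebesgue) \<le> liminf (\<lambda>k. g k x)"
      using L by simp
  qed
  have "J_inf s p \<Omega> u \<le> (\<integral>\<^sup>+x. liminf (\<lambda>k. g k x) \<partial>lebesgue)"
    unfolding Ji by (rule nn_integral_mono_AE[OF A])
  also have "\<dots> \<le> liminf (\<lambda>k. \<integral>\<^sup>+x. g k x \<partial>lebesgue)"
    by (rule nn_integral_liminf[OF gm])
  finally show ?thesis by (simp add: Jk)
qed

lemma J_delta_le_J_inf: "J_delta s p \<Omega> d u \<le> J_inf s p \<Omega> u"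
proof -
  have ind: "(X::ennreal) * indicator A z \<le> X" for X A z
    by (simp add: indicator_def)
  show ?thesis
    unfolding J_delta_def J_inf_def Let_def
    apply (rule nn_integral_mono)
    apply (rule order_trans[OF ind])
    apply (rule nn_integral_mono)
    apply (rule ind)
    done
qed

theorem lemma5p1:
  fixes \<Omega> :: "'a::euclidean_space set" and s p :: real
  assumes "bounded_lipschitz_domain \<Omega>"
    and "0 < s" "s < 1" and "1 < p"
  shows "gamma_converges_at_top (J_delta s p \<Omega>) (J_inf s p \<Omega>) (in_Lp p \<Omega>) (Lp_conv p \<Omega>)"
proof -
  from assms(1) have \<Omega>o: "open \<Omega>" "\<Omega> \<noteq> {}" by (simp_all add: bounded_lipschitz_domain_def)
  have p0: "0 < p" using assms(4) by simp
  show ?thesis unfolding gamma_converges_at_top_def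
  proof (intro allI impI)
    fix \<delta> :: "nat \<Rightarrow> real" and u
    assume \<delta>: "filterlim \<delta> at_top sequentially" and u: "in_Lp p \<Omega> u"
    show "(\<forall>uk. (\<forall>k. in_Lp p \<Omega> (uk k)) \<longrightarrow> Lp_conv p \<Omega> uk u \<longrightarrow>
            J_inf s p \<Omega> u \<le> liminf (\<lambda>k. J_delta s p \<Omega> (\<delta> k) (uk k))) \<and>
          (\<exists>uk. (\<forall>k. in_Lp p \<Omega> (uk k)) \<and> Lp_conv p \<Omega> uk u \<and>
            limsup (\<lambda>k. J_delta s p \<Omega> (\<delta> k) (uk k)) \<le> J_inf s p \<Omega> u)"
    proof (rule conjI)
    show "\<forall>uk. (\<forall>k. in_Lp p \<Omega> (uk k)) \<longrightarrow> Lp_conv p \<Omega> uk u \<longrightarrow>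
            J_inf s p \<Omega> u \<le> liminf (\<lambda>k. J_delta s p \<Omega> (\<delta> k) (uk k))"
    proof (intro allI impI)
      fix uk assume uk: "\<forall>k. in_Lp p \<Omega> (uk k)" and conv: "Lp_conv p \<Omega> uk u"
      define L where "L = liminf (\<lambda>k. J_delta s p \<Omega> (\<delta> k) (uk k))"
      obtain r1 where r1: "strict_mono r1" "((\<lambda>k. J_delta s p \<Omega> (\<delta> k) (uk k)) \<circ> r1) \<longlonglongrightarrow> L"
        unfolding L_def using liminf_subseq_lim by blast
      have conv1: "Lp_conv p \<Omega> (\<lambda>k. uk (r1 k)) u"
        using LIMSEQ_subseq_LIMSEQ[OF conv[unfolded Lp_conv_def] r1(1)]
        unfolding Lp_conv_def by (simp add: o_def)
      have mk: "\<And>k. zext \<Omega> (uk k) \<in> borel_measurable lebesgue"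
        using uk by (simp add: in_Lp_def)
      have mu: "zext \<Omega> u \<in> borel_measurable lebesgue"
        using u by (simp add: in_Lp_def)
      obtain r2 where r2: "strict_mono r2"
        "AE x in lebesgue. (\<lambda>n. zext \<Omega> (uk (r1 (r2 n))) x) \<longlonglongrightarrow> zext \<Omega> u x"
        using ae_subseq[OF p0 mk mu conv1] by blast
      have \<delta>': "filterlim (\<lambda>n. \<delta> (r1 (r2 n))) at_top sequentially"
        by (rule filterlim_compose[OF \<delta> filterlim_subseq[OF strict_mono_compose[OF r1(1) r2(1)]]])
      have "J_inf s p \<Omega> u \<le> liminf (\<lambda>n. J_delta s p \<Omega> (\<delta> (r1 (r2 n))) (uk (r1 (r2 n))))"
        by (rule fatou_core[OF \<Omega>o p0 \<delta>' mk r2(2)])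
      also have "\<dots> = L"
      proof (rule lim_imp_Liminf, simp)
        show "(\<lambda>n. J_delta s p \<Omega> (\<delta> (r1 (r2 n))) (uk (r1 (r2 n)))) \<longlonglongrightarrow> L"
          using LIMSEQ_subseq_LIMSEQ[OF r1(2) r2(1)] by (simp add: o_def)
      qed
      finally show "J_inf s p \<Omega> u \<le> liminf (\<lambda>k. J_delta s p \<Omega> (\<delta> k) (uk k))"
        by (simp add: L_def)
    qed
    show "\<exists>uk. (\<forall>k. in_Lp p \<Omega> (uk k)) \<and> Lp_conv p \<Omega> uk u \<and>
            limsup (\<lambda>k. J_delta s p \<Omega> (\<delta> k) (uk k)) \<le> J_inf s p \<Omega> u"
    proof -
      have "Lp_conv p \<Omega> (\<lambda>_. u) u"
        unfolding Lp_conv_def by simp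
      moreover have "limsup (\<lambda>k. J_delta s p \<Omega> (\<delta> k) ((\<lambda>_. u) k)) \<le> J_inf s p \<Omega> u"
        by (intro Limsup_bounded always_eventually allI J_delta_le_J_inf)
      ultimately show ?thesis using u by (intro exI[of _ "\<lambda>_. u"]) simp
    qed
    qed
  qed
qed

end
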